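(* Let $p$ be a prime, $e\ge1$, $G$ a finite abelian group of order $p^e$, and $q\neq p$ a prime. Let $S=\bigoplus_\rho S_\rho\subset\mathbf{Q}[G]$, $S_\rho\cong\mathbf{Z}[\omega_{k(\rho)}]$, be the integral closure of $\mathbf{Z}[G]$ in $\mathbf{Q}[G]$, the sum running over the chosen representatives $\rho$ of the equivalence classes of representations, and let $e_\rho\in S$ be the idempotent of the factor $S_\rho$. Let $\psi^\ell$ ($\ell$ a prime) denote the ring endomorphism of $\mathbf{Q}[G]$ with $\psi^\ell(g)=g^\ell$. Then $$\psi^p(e_\rho)=\sum_{\tau:\ \psi\tau=\rho}e_\tau\ \text{ if }\rho\neq1,\qquad \psi^p(e_1)=e_1+\sum_{\tau\neq1,\ \psi\tau=1}e_\tau,\qquad \psi^q(e_\rho)=e_\rho,$$ where the sums run over chosen representatives $\tau$.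
   Context: A representation is a group homomorphism $\rho\colon G\to\mathbf{C}^*$; its level $k(\rho)$ is defined by $|\rho(G)|=p^{k(\rho)}$. Two representations are equivalent if they have the same kernel; $1$ is the trivial representation. For a representation $\tau$ of positive level, $\psi\tau$ is $x\mapsto\tau(x^p)$. A representative is chosen in each equivalence class so that, for chosen representatives $\tau,\rho$, if $\psi\tau$ is equivalent to $\rho$ then $\psi\tau=\rho$. $\omega_k=\exp(2\pi i/p^k)$. $\mathbf{Q}[G]\cong\bigoplus_\rho\mathbf{Q}(\omega_{k(\rho)})$ via the maps induced by the $\rho$, and $S_\rho$ is the preimage of $\mathbf{Z}[\omega_{k(\rho)}]$ in the corresponding factor. *)

theory Defs
  imports Complex_Main "HOL-Library.Function_Algebras" "HOL-Computational_Algebra.Primes"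
begin

text \<open>The finite abelian group G is a finite type of class ab_group_add (written
additively). The group algebra Q[G] is represented by functions G -> rat
(coefficient of each group element).\<close>

definition gmul :: "nat \<Rightarrow> 'g::ab_group_add \<Rightarrow> 'g" where
  "gmul n x = (\<Sum>i<n. x)"   \<comment> \<open>the power x^n in multiplicative notation\<close>

definition is_rep :: "('g::ab_group_add \<Rightarrow> complex) \<Rightarrow> bool" where
  "is_rep \<rho> \<longleftrightarrow> (\<forall>x y. \<rho> (x + y) = \<rho> x * \<rho> y) \<and> (\<forall>x. \<rho> x \<noteq> 0)"

definition rep_ker :: "('g::ab_group_add \<Rightarrow> complex) \<Rightarrow> 'g set" where
  "rep_ker \<rho> = {x. \<rho> x = 1}"

definition rep_equiv :: "('g::ab_group_add \<Rightarrow> complex) \<Rightarrow> ('g \<Rightarrow> complex) \<Rightarrow> bool" where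
  "rep_equiv \<rho> \<sigma> \<longleftrightarrow> rep_ker \<rho> = rep_ker \<sigma>"

definition triv_rep :: "'g \<Rightarrow> complex" where
  "triv_rep = (\<lambda>_. 1)"

definition psi_rep :: "nat \<Rightarrow> ('g::ab_group_add \<Rightarrow> complex) \<Rightarrow> ('g \<Rightarrow> complex)" where
  "psi_rep p \<tau> = (\<lambda>x. \<tau> (gmul p x))"

definition rep_ext :: "('g::{finite,ab_group_add} \<Rightarrow> complex) \<Rightarrow> ('g \<Rightarrow> rat) \<Rightarrow> complex" where
  "rep_ext \<rho> a = (\<Sum>g\<in>UNIV. of_rat (a g) * \<rho> g)"

definition psi_alg :: "nat \<Rightarrow> ('g::{finite,ab_group_add} \<Rightarrow> rat) \<Rightarrow> ('g \<Rightarrow> rat)" where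
  "psi_alg l a = (\<lambda>h. \<Sum>g\<in>{g. gmul l g = h}. a g)"

text \<open>The idempotent e_rho of Q[G] belonging to the factor indexed by rho in
Q[G] = (+)_rho Q(omega_k(rho)) (the map being induced by the representatives
rho): it is mapped to 1 by every representation equivalent to rho and to 0 by
every other representation.\<close>
definition idem :: "('g::{finite,ab_group_add} \<Rightarrow> complex) \<Rightarrow> ('g \<Rightarrow> rat)" where
  "idem \<rho> = (THE a. \<forall>\<sigma>. is_rep \<sigma> \<longrightarrow>
              rep_ext \<sigma> a = (if rep_equiv \<sigma> \<rho> then 1 else 0))"

text \<open>A system R of chosen representatives, one in each equivalence class,
compatible with psi: for chosen tau (of positive level, i.e. nontrivial) and rho,
if psi tau is equivalent to rho then psi tau = rho.\<close>
definition rep_system :: "nat \<Rightarrow> ('g::ab_group_add \<Rightarrow> complex) set \<Rightarrow> bool" where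
  "rep_system p R \<longleftrightarrow>
     (\<forall>\<rho>\<in>R. is_rep \<rho>) \<and>
     (\<forall>\<sigma>. is_rep \<sigma> \<longrightarrow> (\<exists>!\<rho>. \<rho> \<in> R \<and> rep_equiv \<sigma> \<rho>)) \<and>
     (\<forall>\<tau>\<in>R. \<forall>\<rho>\<in>R. \<tau> \<noteq> triv_rep \<longrightarrow> rep_equiv (psi_rep p \<tau>) \<rho> \<longrightarrow> psi_rep p \<tau> = \<rho>)"

end

theory Submission
  imports Defs "HOL-Library.FuncSet"
begin

lemma gmul_0[simp]: "gmul 0 x = 0" by (simp add: gmul_def)
lemma gmul_Suc: "gmul (Suc n) x = x + gmul n x" by (simp add: gmul_def add.commute)
lemma gmul_1[simp]: "gmul 1 x = x" by (simp add: gmul_def)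
lemma gmul_Suc0[simp]: "gmul (Suc 0) x = x" by (simp add: gmul_def)
lemma gmul_add: "gmul (a + b) x = gmul a x + gmul b x"
  by (induction a) (simp_all add: gmul_Suc add.assoc)
lemma gmul_distrib: "gmul n (x + y) = gmul n x + gmul n y"
  by (simp add: gmul_def sum.distrib)
lemma gmul_neg: "gmul n (- x) = - gmul n x"
  by (simp add: gmul_def sum_negf)
lemma gmul_mult: "gmul (a * b) x = gmul a (gmul b x)"
  by (induction a) (simp_all add: gmul_Suc gmul_add)
lemma gmul_zero[simp]: "gmul n 0 = 0" by (simp add: gmul_def)

lemma sum_const_gmul: "finite A \<Longrightarrow> (\<Sum>a\<in>A. x) = gmul (card A) x"
  by (induction rule: finite_induct) (simp_all add: gmul_Suc)

lemma gmul_card: fixes x :: "'g::{finite,ab_group_add}" shows "gmul (card (UNIV :: 'g set)) x = 0"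
proof -
  have "(\<Sum>y\<in>UNIV. y) = (\<Sum>y\<in>UNIV. x + y)"
    by (rule sum.reindex_bij_witness[of _ "\<lambda>y. x + y" "\<lambda>y. -x + y"]) (auto simp: algebra_simps)
  also have "\<dots> = gmul (card (UNIV :: 'g set)) x + (\<Sum>y\<in>UNIV. y)"
    by (simp add: sum.distrib sum_const_gmul)
  finally show ?thesis by simp
qed

lemma rep_0: "is_rep \<sigma> \<Longrightarrow> \<sigma> 0 = 1"
proof -
  assume r: "is_rep \<sigma>"
  then have "\<sigma> 0 = \<sigma> 0 * \<sigma> 0" "\<sigma> 0 \<noteq> 0" unfolding is_rep_def by (metis add_0)+
  thus ?thesis by simp
qed

lemma rep_gmul: "is_rep \<sigma> \<Longrightarrow> \<sigma> (gmul n x) = \<sigma> x ^ n"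
  by (induction n) (simp_all add: rep_0 gmul_Suc is_rep_def)

lemma rep_neg: "is_rep \<sigma> \<Longrightarrow> \<sigma> (- x) * \<sigma> x = 1"
  by (metis is_rep_def rep_0 left_minus)

lemma rep_pow_card: fixes \<sigma> :: "'g::{finite,ab_group_add} \<Rightarrow> complex" shows "is_rep \<sigma> \<Longrightarrow> \<sigma> x ^ (card (UNIV :: 'g set)) = 1"
  by (metis rep_gmul gmul_card rep_0)

definition subgrp :: "'g::ab_group_add set \<Rightarrow> bool" where
  "subgrp H \<longleftrightarrow> 0 \<in> H \<and> (\<forall>x\<in>H. \<forall>y\<in>H. x + y \<in> H) \<and> (\<forall>x\<in>H. -x \<in> H)"

definition hchar :: "'g::ab_group_add set \<Rightarrow> ('g \<Rightarrow> complex) \<Rightarrow> bool" where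
  "hchar H \<chi> \<longleftrightarrow> (\<forall>x\<in>H. \<forall>y\<in>H. \<chi> (x + y) = \<chi> x * \<chi> y) \<and> (\<forall>x\<in>H. \<chi> x \<noteq> 0)"

lemma subgrp_gmul: "subgrp H \<Longrightarrow> x \<in> H \<Longrightarrow> gmul n x \<in> H"
  by (induction n) (auto simp: gmul_Suc subgrp_def)

lemma hchar_0: "subgrp H \<Longrightarrow> hchar H \<chi> \<Longrightarrow> \<chi> 0 = 1"
proof -
  assume "subgrp H" "hchar H \<chi>"
  then have "\<chi> 0 = \<chi> 0 * \<chi> 0" "\<chi> 0 \<noteq> 0" unfolding hchar_def subgrp_def by (metis add_0)+
  thus ?thesis by simp
qed

lemma extend_char:
  fixes H :: "'g::{finite,ab_group_add} set"
  assumes H: "subgrp H" and chi: "hchar H \<chi>" and x: "x \<notin> H"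
    and n: "n = (LEAST n. 0 < n \<and> gmul n x \<in> H)"
    and z: "z ^ n = \<chi> (gmul n x)"
  shows "\<exists>H' \<chi>'. subgrp H' \<and> H \<subset> H' \<and> hchar H' \<chi>' \<and> (\<forall>h\<in>H. \<chi>' h = \<chi> h) \<and> \<chi>' x = z \<and> x \<in> H'"
proof -
  have ex: "0 < card (UNIV :: 'g set) \<and> gmul (card (UNIV :: 'g set)) x \<in> H" using H by (simp add: gmul_card subgrp_def card_gt_0_iff)
  have npos: "0 < n" and nH: "gmul n x \<in> H" using LeastI_ex[of "\<lambda>n. 0 < n \<and> gmul n x \<in> H"] ex n by blast+
  have nmin: "\<And>m. 0 < m \<Longrightarrow> m < n \<Longrightarrow> gmul m x \<notin> H" using n not_less_Least by blast
  have "n \<noteq> 1" using nH x gmul_1[of x] by metis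
  then have n1: "1 < n" using npos by linarith
  have z0: "z \<noteq> 0" using z npos chi nH unfolding hchar_def by (metis zero_power)
  define H' where "H' = {h + gmul k x | h k. h \<in> H \<and> k < n}"
  have uniq: "h1 = h2 \<and> k1 = k2" if "h1 \<in> H" "h2 \<in> H" "k1 < n" "k2 < n"
    "h1 + gmul k1 x = h2 + gmul k2 x" for h1 h2 k1 k2
  proof -
    have gen: "h1 = h2 \<and> k1 = k2" if "h1 \<in> H" "h2 \<in> H" "k1 < n" "k2 < n" "k2 \<le> k1"
      "h1 + gmul k1 x = h2 + gmul k2 x" for h1 h2 k1 k2
    proof -
      have "gmul k1 x = gmul (k1 - k2) x + gmul k2 x" using that gmul_add[of "k1-k2" k2 x] by simp
      then have "gmul (k1 - k2) x = h2 - h1" using that(6) by (simp add: algebra_simps)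
      moreover have "h2 + - h1 \<in> H" using that(1,2) H unfolding subgrp_def by blast
      ultimately have inH: "gmul (k1 - k2) x \<in> H" by simp
      have "k1 - k2 < n" using that(3) by linarith
      then have "k1 - k2 = 0" using nmin[of "k1 - k2"] inH by blast
      then have "k1 = k2" using that by simp
      then show ?thesis using that by simp
    qed
    show ?thesis using gen[of h1 h2 k1 k2] gen[of h2 h1 k2 k1] that by (cases "k2 \<le> k1") auto
  qed
  define \<chi>' where "\<chi>' y = (let hk = (SOME hk. fst hk \<in> H \<and> snd hk < n \<and> y = fst hk + gmul (snd hk) x)
     in \<chi> (fst hk) * z ^ snd hk)" for y
  have chi'_eq: "\<chi>' (h + gmul k x) = \<chi> h * z ^ k" if "h \<in> H" "k < n" for h k
  proof -
    let ?P = "\<lambda>hk. fst hk \<in> H \<and> snd hk < n \<and> h + gmul k x = fst hk + gmul (snd hk) x"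
    have "?P (h, k)" using that by simp
    then have "?P (SOME hk. ?P hk)" by (rule someI)
    then have "(SOME hk. ?P hk) = (h, k)"
    proof -
      assume a: "?P (SOME hk. ?P hk)"
      obtain h' k' where hk: "(SOME hk. ?P hk) = (h', k')" by fastforce
      then have "h' \<in> H" "k' < n" "h + gmul k x = h' + gmul k' x" using a by auto
      then have "h = h' \<and> k = k'" using uniq that by blast
      then show ?thesis using hk by simp
    qed
    then show ?thesis unfolding \<chi>'_def Let_def by simp
  qed
  have closed: "y1 + y2 \<in> H' \<and> \<chi>' (y1 + y2) = \<chi>' y1 * \<chi>' y2" if yH: "y1 \<in> H'" "y2 \<in> H'" for y1 y2
  proof -
    obtain h1 k1 h2 k2 where y: "y1 = h1 + gmul k1 x" "y2 = h2 + gmul k2 x" "h1 \<in> H" "h2 \<in> H" "k1 < n" "k2 < n"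
      using yH unfolding H'_def by blast
    have hh: "h1 + h2 \<in> H" using y H unfolding subgrp_def by blast
    show ?thesis
    proof (cases "k1 + k2 < n")
      case True
      have e: "y1 + y2 = (h1 + h2) + gmul (k1 + k2) x" using y by (simp add: gmul_add algebra_simps)
      have "\<chi>' (y1 + y2) = \<chi> (h1 + h2) * z ^ (k1 + k2)" unfolding e by (rule chi'_eq[OF hh True])
      also have "\<dots> = (\<chi> h1 * z ^ k1) * (\<chi> h2 * z ^ k2)" using chi y unfolding hchar_def by (simp add: power_add)
      finally have "\<chi>' (y1 + y2) = \<chi>' y1 * \<chi>' y2" using y chi'_eq by simp
      moreover have "y1 + y2 \<in> H'" unfolding e H'_def using hh True by blast
      ultimately show ?thesis by blast
    next
      case False
      have e: "y1 + y2 = (h1 + h2 + gmul n x) + gmul (k1 + k2 - n) x"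
        using y False gmul_add[of n "k1 + k2 - n" x] gmul_add[of k1 k2 x] by (simp add: algebra_simps)
      have hh2: "h1 + h2 + gmul n x \<in> H" using hh nH H unfolding subgrp_def by blast
      have lt: "k1 + k2 - n < n" using y by simp
      have "\<chi>' (y1 + y2) = \<chi> (h1 + h2 + gmul n x) * z ^ (k1 + k2 - n)" unfolding e by (rule chi'_eq[OF hh2 lt])
      also have "\<dots> = \<chi> h1 * \<chi> h2 * (z ^ n * z ^ (k1 + k2 - n))" using chi hh nH y z unfolding hchar_def by simp
      also have "z ^ n * z ^ (k1 + k2 - n) = z ^ k1 * z ^ k2" using False by (simp flip: power_add)
      finally have "\<chi>' (y1 + y2) = \<chi>' y1 * \<chi>' y2" using y chi'_eq by simp
      then show ?thesis using e hh2 lt unfolding H'_def by blast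
    qed
  qed
  have negc: "- y \<in> H'" if yH: "y \<in> H'" for y
  proof -
    obtain h k where y: "y = h + gmul k x" "h \<in> H" "k < n" using yH unfolding H'_def by blast
    show ?thesis
    proof (cases "k = 0")
      case True then show ?thesis using y H unfolding H'_def subgrp_def by force
    next
      case False
      have "- y = (- h - gmul n x) + gmul (n - k) x"
        using y gmul_add[of "n - k" k x] by (simp add: algebra_simps)
      moreover have "- h + - gmul n x \<in> H" using y nH H unfolding subgrp_def by blast
      then have "- h - gmul n x \<in> H" by simp
      moreover have "n - k < n" using False y by simp
      ultimately show ?thesis unfolding H'_def by blast
    qed
  qed
  have inH': "h \<in> H'" if "h \<in> H" for h
  proof -
    have "h = h + gmul 0 x" by simp
    then show ?thesis unfolding H'_def using that npos by blast
  qed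
  have xH': "x \<in> H'"
  proof -
    have "x = 0 + gmul 1 x" by simp
    moreover have "(0::'g) \<in> H" using H unfolding subgrp_def by blast
    ultimately show ?thesis unfolding H'_def using n1 by blast
  qed
  have "0 \<in> H'" using inH' H unfolding subgrp_def by blast
  then have sub: "subgrp H'" unfolding subgrp_def using closed negc by blast
  have "\<chi>' y \<noteq> 0" if yH: "y \<in> H'" for y
  proof -
    obtain h k where y: "y = h + gmul k x" "h \<in> H" "k < n" using yH unfolding H'_def by blast
    then show ?thesis using chi z0 chi'_eq[OF y(2,3)] unfolding hchar_def by simp
  qed
  then have hc: "hchar H' \<chi>'" unfolding hchar_def using closed by blast
  have agree: "\<forall>h\<in>H. \<chi>' h = \<chi> h"
  proof
    fix h assume "h \<in> H"
    then have "\<chi>' (h + gmul 0 x) = \<chi> h * z ^ 0" using chi'_eq npos by blast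
    then show "\<chi>' h = \<chi> h" by simp
  qed
  have "\<chi>' x = z" using chi'_eq[of 0 1] n1 H hchar_0[OF H chi] unfolding subgrp_def by simp
  then show ?thesis using sub hc agree inH' xH' x by blast
qed

lemma full_extend:
  fixes H :: "'g::{finite,ab_group_add} set"
  shows "subgrp H \<Longrightarrow> hchar H \<chi> \<Longrightarrow> \<exists>\<sigma>. is_rep \<sigma> \<and> (\<forall>h\<in>H. \<sigma> h = \<chi> h)"
proof (induction "card (UNIV - H)" arbitrary: H \<chi> rule: less_induct)
  case less
  show ?case
  proof (cases "H = UNIV")
    case True
    then have "is_rep \<chi>" using less.prems unfolding hchar_def is_rep_def by blast
    then show ?thesis by blast
  next
    case False
    then obtain x where x: "x \<notin> H" by blast
    define n where "n = (LEAST n. 0 < n \<and> gmul n x \<in> H)"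
    obtain z :: complex where z: "z ^ n = \<chi> (gmul n x)"
    proof (cases "n = 0")
      case True then show ?thesis using that[of 1] hchar_0[OF less.prems] by simp
    next
      case False
      let ?w = "\<chi> (gmul n x)"
      have "rcis (root n (cmod ?w)) (Arg ?w / real n) ^ n = rcis (root n (cmod ?w) ^ n) (real n * (Arg ?w / real n))"
        by (rule DeMoivre2)
      also have "\<dots> = rcis (cmod ?w) (Arg ?w)" using False by simp
      also have "\<dots> = ?w" by (rule rcis_cmod_Arg)
      finally show ?thesis by (rule that)
    qed
    obtain H' \<chi>' where H': "subgrp H'" "H \<subset> H'" "hchar H' \<chi>'" "\<forall>h\<in>H. \<chi>' h = \<chi> h"
      using extend_char[OF less.prems x n_def z] by blast
    have "UNIV - H' \<subset> UNIV - H" using H'(2) by blast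
    then have "card (UNIV - H') < card (UNIV - H)"
      by (intro psubset_card_mono) simp_all
    then obtain \<sigma> where s: "is_rep \<sigma>" "\<forall>h\<in>H'. \<sigma> h = \<chi>' h" using less.hyps[OF _ H'(1,3)] by blast
    have "\<forall>h\<in>H. \<sigma> h = \<chi> h" using s(2) H'(4) psubsetD[OF H'(2)] by simp
    then show ?thesis using s(1) by blast
  qed
qed

lemma separate:
  fixes g :: "'g::{finite,ab_group_add}"
  assumes g: "g \<noteq> 0"
  shows "\<exists>\<sigma>. is_rep \<sigma> \<and> \<sigma> g \<noteq> 1"
proof -
  let ?H = "{0::'g}"
  let ?c = "\<lambda>_::'g. 1::complex"
  have H: "subgrp ?H" unfolding subgrp_def by simp
  have c: "hchar ?H ?c" unfolding hchar_def by simp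
  define n where "n = (LEAST n. 0 < n \<and> gmul n g \<in> ?H)"
  have ex: "0 < card (UNIV :: 'g set) \<and> gmul (card (UNIV :: 'g set)) g \<in> ?H"
    by (simp add: gmul_card card_gt_0_iff)
  have npos: "0 < n" and "gmul n g \<in> ?H" using LeastI_ex[of "\<lambda>n. 0 < n \<and> gmul n g \<in> ?H"] ex n_def by blast+
  then have "n \<noteq> 1" using g by auto
  then have n1: "1 < n" using npos by linarith
  define z where "z = cis (2 * pi * real 1 / real n)"
  have inj: "inj_on (\<lambda>k. cis (2 * pi * real k / real n)) {..<n}"
    using bij_betw_roots_unity[OF npos] by (simp add: bij_betw_def)
  have "z \<noteq> cis (2 * pi * real 0 / real n)"
  proof
    assume "z = cis (2 * pi * real 0 / real n)"
    then have "(1::nat) = 0" using inj_onD[OF inj, of 1 0] n1 npos unfolding z_def by simp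
    then show False by simp
  qed
  then have z1: "z \<noteq> 1" by simp
  have "z ^ n = cis (real n * (2 * pi * real 1 / real n))" unfolding z_def by (rule DeMoivre)
  also have "\<dots> = 1" using npos by simp
  finally have zn: "z ^ n = ?c (gmul n g)" by simp
  obtain H' \<chi>' where H': "subgrp H'" "hchar H' \<chi>'" "\<chi>' g = z" "g \<in> H'"
  proof -
    have "(g::'g) \<notin> ?H" using g by simp
    from extend_char[OF H c this n_def zn] show ?thesis using that by blast
  qed
  obtain \<sigma> where "is_rep \<sigma>" "\<forall>h\<in>H'. \<sigma> h = \<chi>' h" using full_extend[OF H'(1,2)] by blast
  then have "\<sigma> g \<noteq> 1" using H'(3,4) z1 by simp
  then show ?thesis using \<open>is_rep \<sigma>\<close> by blast
qed

lemma finite_reps: "finite {\<sigma>::'g::{finite,ab_group_add} \<Rightarrow> complex. is_rep \<sigma>}"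
proof -
  let ?N = "card (UNIV :: 'g set)"
  let ?U = "{z::complex. z ^ ?N = 1}"
  have N: "1 \<le> ?N" by (simp add: Suc_le_eq card_gt_0_iff)
  have fU: "finite ?U" by (rule finite_roots_unity[OF N])
  have "{\<sigma>::'g \<Rightarrow> complex. is_rep \<sigma>} \<subseteq> Pi\<^sub>E UNIV (\<lambda>_. ?U)"
    unfolding PiE_UNIV_domain using rep_pow_card by auto
  moreover have "finite (Pi\<^sub>E (UNIV::'g set) (\<lambda>_. ?U))" by (rule finite_PiE) (simp_all add: fU)
  ultimately show ?thesis by (rule finite_subset)
qed

lemma is_rep_triv: "is_rep triv_rep" unfolding is_rep_def triv_rep_def by simp

lemma is_rep_mult: "is_rep \<sigma> \<Longrightarrow> is_rep \<tau> \<Longrightarrow> is_rep (\<lambda>x. \<sigma> x * \<tau> x)"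
  unfolding is_rep_def by (simp add: algebra_simps)

lemma is_rep_div: "is_rep \<sigma> \<Longrightarrow> is_rep \<tau> \<Longrightarrow> is_rep (\<lambda>x. \<sigma> x / \<tau> x)"
  unfolding is_rep_def by simp

lemma orth:
  fixes g :: "'g::{finite,ab_group_add}"
  assumes g: "g \<noteq> 0"
  shows "(\<Sum>\<sigma>\<in>{\<sigma>. is_rep \<sigma>}. \<sigma> g) = 0"
proof -
  obtain \<sigma>0 where s0: "is_rep \<sigma>0" "\<sigma>0 g \<noteq> 1" using separate[OF g] by blast
  have nz: "\<sigma>0 x \<noteq> 0" for x using s0 unfolding is_rep_def by blast
  let ?S = "(\<Sum>\<sigma>\<in>{\<sigma>::'g\<Rightarrow>complex. is_rep \<sigma>}. \<sigma> g)"
  have "(\<Sum>\<sigma>\<in>{\<sigma>::'g\<Rightarrow>complex. is_rep \<sigma>}. \<sigma>0 g * \<sigma> g) = ?S"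
    by (rule sum.reindex_bij_witness[of _ "\<lambda>\<tau> x. \<tau> x / \<sigma>0 x" "\<lambda>\<sigma> x. \<sigma>0 x * \<sigma> x"])
       (auto simp: nz is_rep_mult is_rep_div s0)
  then have "\<sigma>0 g * ?S = ?S" by (simp add: sum_distrib_left)
  then have "(\<sigma>0 g - 1) * ?S = 0" by (simp add: algebra_simps)
  then show ?thesis using s0 by simp
qed

lemma rep_ext_inv:
  fixes a :: "'g::{finite,ab_group_add} \<Rightarrow> rat"
  shows "(\<Sum>\<sigma>\<in>{\<sigma>. is_rep \<sigma>}. rep_ext \<sigma> a * \<sigma> (- h)) = of_rat (a h) * of_nat (card {\<sigma>::'g\<Rightarrow>complex. is_rep \<sigma>})"
proof -
  let ?R = "{\<sigma>::'g\<Rightarrow>complex. is_rep \<sigma>}"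
  have inner: "(\<Sum>\<sigma>\<in>?R. \<sigma> (g - h)) = (if g = h then of_nat (card ?R) else 0)" for g
  proof (cases "g = h")
    case True then show ?thesis by (simp add: rep_0)
  next
    case False
    then have "g - h \<noteq> 0" by simp
    then show ?thesis using orth[of "g - h"] False by simp
  qed
  have "(\<Sum>\<sigma>\<in>?R. rep_ext \<sigma> a * \<sigma> (- h)) = (\<Sum>\<sigma>\<in>?R. \<Sum>g\<in>UNIV. of_rat (a g) * \<sigma> (g + - h))"
  proof (rule sum.cong[OF refl])
    fix \<sigma> assume "\<sigma> \<in> ?R"
    then have "\<sigma> (g + - h) = \<sigma> g * \<sigma> (- h)" for g unfolding is_rep_def by blast
    then show "rep_ext \<sigma> a * \<sigma> (- h) = (\<Sum>g\<in>UNIV. of_rat (a g) * \<sigma> (g + - h))"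
      unfolding rep_ext_def by (simp add: sum_distrib_right mult.assoc)
  qed
  also have "\<dots> = (\<Sum>g\<in>UNIV. of_rat (a g) * (\<Sum>\<sigma>\<in>?R. \<sigma> (g + - h)))"
    by (subst sum.swap) (simp add: sum_distrib_left)
  also have "\<dots> = (\<Sum>g\<in>UNIV. if g = h then of_rat (a g) * of_nat (card ?R) else 0)"
    by (rule sum.cong) (simp_all add: inner)
  also have "\<dots> = of_rat (a h) * of_nat (card ?R)" by simp
  finally show ?thesis .
qed

lemma rep_ext_unique:
  fixes a b :: "'g::{finite,ab_group_add} \<Rightarrow> rat"
  assumes "\<And>\<sigma>. is_rep \<sigma> \<Longrightarrow> rep_ext \<sigma> a = rep_ext \<sigma> b"
  shows "a = b"
proof
  fix h
  let ?R = "{\<sigma>::'g\<Rightarrow>complex. is_rep \<sigma>}"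
  have "card ?R \<noteq> 0" using finite_reps is_rep_triv by (metis card_0_eq empty_iff mem_Collect_eq)
  moreover have "(\<Sum>\<sigma>\<in>?R. rep_ext \<sigma> a * \<sigma> (- h)) = (\<Sum>\<sigma>\<in>?R. rep_ext \<sigma> b * \<sigma> (- h))"
    using assms by simp
  then have "of_rat (a h) * of_nat (card ?R) = (of_rat (b h) :: complex) * of_nat (card ?R)"
    by (simp only: rep_ext_inv)
  ultimately show "a h = b h" by simp
qed

lemma fun_sum_apply: "(sum f S) x = (\<Sum>i\<in>S. f i x)"
proof (cases "finite S")
  case True then show ?thesis by (induction rule: finite_induct) simp_all
next
  case False then show ?thesis by simp
qed

lemma rep_ext_add: "rep_ext \<sigma> (a + b) = rep_ext \<sigma> a + rep_ext \<sigma> b"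
  unfolding rep_ext_def by (simp add: of_rat_add distrib_right sum.distrib)

lemma rep_ext_diff: "rep_ext \<sigma> (a - b) = rep_ext \<sigma> a - rep_ext \<sigma> b"
  unfolding rep_ext_def by (simp add: of_rat_diff left_diff_distrib sum_subtractf)

lemma rep_ext_zero: "rep_ext \<sigma> 0 = 0"
  unfolding rep_ext_def by simp

lemma rep_ext_zero': "rep_ext \<sigma> (\<lambda>_. 0) = 0"
  unfolding rep_ext_def by simp

lemma rep_ext_sum: "rep_ext \<sigma> (\<Sum>i\<in>S. f i) = (\<Sum>i\<in>S. rep_ext \<sigma> (f i))"
proof (cases "finite S")
  case True then show ?thesis
  proof (induction rule: finite_induct)
    case empty
    have "rep_ext \<sigma> (sum f {}) = rep_ext \<sigma> 0" by (simp only: sum.empty)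
    then show ?case by (simp add: rep_ext_zero rep_ext_zero')
  next
    case (insert x F)
    have "rep_ext \<sigma> (sum f (insert x F)) = rep_ext \<sigma> (f x + sum f F)" by (rule arg_cong[where f="rep_ext \<sigma>"], rule sum.insert[OF insert(1,2)])
    also have "\<dots> = rep_ext \<sigma> (f x) + rep_ext \<sigma> (sum f F)" by (rule rep_ext_add)
    also have "\<dots> = rep_ext \<sigma> (f x) + (\<Sum>i\<in>F. rep_ext \<sigma> (f i))" by (simp only: insert.IH)
    finally show ?case by (simp only: sum.insert[OF insert(1,2)])
  qed
next
  case False
  have "rep_ext \<sigma> (sum f S) = rep_ext \<sigma> 0" by (rule arg_cong[where f="rep_ext \<sigma>"], rule sum.infinite[OF False])
  then show ?thesis using False by (simp add: rep_ext_zero rep_ext_zero')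
qed

lemma rep_ker_subgrp: "is_rep \<sigma> \<Longrightarrow> subgrp (rep_ker \<sigma>)"
proof -
  assume s: "is_rep \<sigma>"
  have "0 \<in> rep_ker \<sigma>" using rep_0[OF s] unfolding rep_ker_def by simp
  moreover have "x + y \<in> rep_ker \<sigma>" if "x \<in> rep_ker \<sigma>" "y \<in> rep_ker \<sigma>" for x y
    using that s unfolding rep_ker_def is_rep_def by simp
  moreover have "- x \<in> rep_ker \<sigma>" if "x \<in> rep_ker \<sigma>" for x
    using that rep_neg[OF s, of x] unfolding rep_ker_def by simp
  ultimately show ?thesis unfolding subgrp_def by blast
qed

lemma avg:
  fixes K :: "'g::{finite,ab_group_add} set"
  assumes K: "subgrp K" and s: "is_rep \<sigma>"
  shows "rep_ext \<sigma> (\<lambda>g. if g \<in> K then 1 / of_nat (card K) else 0) = (if K \<subseteq> rep_ker \<sigma> then 1 else 0)"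
proof -
  have cK: "card K \<noteq> 0" using K unfolding subgrp_def by auto
  have "rep_ext \<sigma> (\<lambda>g. if g \<in> K then 1 / of_nat (card K) else 0) =
        (\<Sum>g\<in>UNIV. if g \<in> K then \<sigma> g / of_nat (card K) else 0)"
    unfolding rep_ext_def by (rule sum.cong) (simp_all add: of_rat_divide)
  also have "\<dots> = (\<Sum>g\<in>K. \<sigma> g) / of_nat (card K)"
    by (simp add: sum.inter_restrict[symmetric] sum_divide_distrib)
  also have "(\<Sum>g\<in>K. \<sigma> g) = (if K \<subseteq> rep_ker \<sigma> then of_nat (card K) else 0)"
  proof (cases "K \<subseteq> rep_ker \<sigma>")
    case True
    then have "(\<Sum>g\<in>K. \<sigma> g) = (\<Sum>g\<in>K. 1)" by (intro sum.cong) (auto simp: rep_ker_def)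
    then show ?thesis using True by simp
  next
    case False
    then obtain h0 where h0: "h0 \<in> K" "\<sigma> h0 \<noteq> 1" unfolding rep_ker_def by blast
    have "(\<Sum>g\<in>K. \<sigma> h0 * \<sigma> g) = (\<Sum>g\<in>K. \<sigma> g)"
    proof (rule sum.reindex_bij_witness[of _ "\<lambda>g. - h0 + g" "\<lambda>g. h0 + g"])
      show "\<And>a. a \<in> K \<Longrightarrow> h0 + a \<in> K" using K h0 unfolding subgrp_def by blast
      show "\<And>a. a \<in> K \<Longrightarrow> - h0 + a \<in> K" using K h0 unfolding subgrp_def by blast
      show "\<And>a. a \<in> K \<Longrightarrow> \<sigma> (h0 + a) = \<sigma> h0 * \<sigma> a" using s unfolding is_rep_def by blast
    qed (simp_all add: add.assoc[symmetric])
    then have "(\<sigma> h0 - 1) * (\<Sum>g\<in>K. \<sigma> g) = 0" by (simp add: sum_distrib_left algebra_simps)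
    then show ?thesis using h0 False by simp
  qed
  finally show ?thesis using cK by simp
qed

lemma exist_K:
  fixes K :: "'g::{finite,ab_group_add} set"
  shows "\<exists>a. \<forall>\<sigma>. is_rep \<sigma> \<longrightarrow> rep_ext \<sigma> a = (if rep_ker \<sigma> = K then 1 else 0)"
proof (induction "card (UNIV - K)" arbitrary: K rule: less_induct)
  case less
  show ?case
  proof (cases "subgrp K")
    case False
    then have "rep_ker \<sigma> \<noteq> K" if "is_rep \<sigma>" for \<sigma> using rep_ker_subgrp[OF that] by blast
    then show ?thesis by (intro exI[of _ 0]) (simp add: rep_ext_zero rep_ext_zero')
  next
    case True
    have "\<forall>H\<in>{H. K \<subset> H}. \<exists>a. \<forall>\<sigma>. is_rep \<sigma> \<longrightarrow> rep_ext \<sigma> a = (if rep_ker \<sigma> = H then 1 else 0)"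
    proof
      fix H assume "H \<in> {H. K \<subset> H}"
      then have "UNIV - H \<subset> UNIV - K" by blast
      then have "card (UNIV - H) < card (UNIV - K)" by (intro psubset_card_mono) simp_all
      then show "\<exists>a. \<forall>\<sigma>. is_rep \<sigma> \<longrightarrow> rep_ext \<sigma> a = (if rep_ker \<sigma> = H then 1 else 0)" by (rule less.hyps)
    qed
    from bchoice[OF this] obtain f where f0: "\<forall>H\<in>{H. K \<subset> H}. \<forall>\<sigma>. is_rep \<sigma> \<longrightarrow> rep_ext \<sigma> (f H) = (if rep_ker \<sigma> = H then 1 else 0)"
      by blast
    have f: "\<And>H \<sigma>. H \<in> {H. K \<subset> H} \<Longrightarrow> is_rep \<sigma> \<Longrightarrow> rep_ext \<sigma> (f H) = (if rep_ker \<sigma> = H then 1 else 0)"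
      using f0 by blast
    define a where "a = (\<lambda>g. if g \<in> K then 1 / of_nat (card K) else 0) - (\<Sum>H\<in>{H. K \<subset> H}. f H)"
    have "rep_ext \<sigma> a = (if rep_ker \<sigma> = K then 1 else 0)" if s: "is_rep \<sigma>" for \<sigma>
    proof -
      have "rep_ext \<sigma> a = (if K \<subseteq> rep_ker \<sigma> then 1 else 0) - (\<Sum>H\<in>{H. K \<subset> H}. if rep_ker \<sigma> = H then 1 else 0)"
        unfolding a_def rep_ext_diff rep_ext_sum avg[OF True s] using f s by simp
      also have "(\<Sum>H\<in>{H. K \<subset> H}. if rep_ker \<sigma> = H then 1 else 0) = (if K \<subset> rep_ker \<sigma> then 1 else (0::complex))"
        by (simp add: sum.delta)
      finally show ?thesis by auto
    qed
    then show ?thesis by blast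
  qed
qed

lemma idem_prop:
  fixes \<rho> :: "'g::{finite,ab_group_add} \<Rightarrow> complex"
  assumes "is_rep \<sigma>"
  shows "rep_ext \<sigma> (idem \<rho>) = (if rep_equiv \<sigma> \<rho> then 1 else 0)"
proof -
  obtain a :: "'g \<Rightarrow> rat" where a: "\<forall>\<sigma>. is_rep \<sigma> \<longrightarrow> rep_ext \<sigma> a = (if rep_ker \<sigma> = rep_ker \<rho> then 1 else 0)"
    using exist_K by blast
  let ?P = "\<lambda>a. \<forall>\<sigma>. is_rep \<sigma> \<longrightarrow> rep_ext \<sigma> a = (if rep_equiv \<sigma> \<rho> then 1 else 0)"
  have "?P a" using a unfolding rep_equiv_def by blast
  moreover have "b = a" if "?P b" for b using that \<open>?P a\<close> by (intro rep_ext_unique) simp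
  ultimately have "?P (THE a. ?P a)" by (rule theI)
  then show ?thesis using assms unfolding idem_def by blast
qed

lemma rep_ext_psi:
  fixes a :: "'g::{finite,ab_group_add} \<Rightarrow> rat"
  shows "rep_ext \<sigma> (psi_alg l a) = rep_ext (psi_rep l \<sigma>) a"
proof -
  have "rep_ext \<sigma> (psi_alg l a) = (\<Sum>h\<in>UNIV. \<Sum>g\<in>{g. g \<in> UNIV \<and> gmul l g = h}. of_rat (a g) * \<sigma> (gmul l g))"
    unfolding rep_ext_def psi_alg_def
    by (rule sum.cong[OF refl]) (simp add: of_rat_sum sum_distrib_right)
  also have "\<dots> = (\<Sum>g\<in>UNIV. of_rat (a g) * \<sigma> (gmul l g))"
    by (rule sum.group) simp_all
  finally show ?thesis unfolding rep_ext_def psi_rep_def .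
qed

lemma is_rep_psi: "is_rep \<sigma> \<Longrightarrow> is_rep (psi_rep l \<sigma>)"
  unfolding is_rep_def psi_rep_def by (simp add: gmul_distrib)

lemma equiv_psi: "rep_equiv \<sigma> \<tau> \<Longrightarrow> rep_equiv (psi_rep l \<sigma>) (psi_rep l \<tau>)"
  unfolding rep_equiv_def rep_ker_def psi_rep_def by (simp add: set_eq_iff)

lemma equiv_triv: "rep_equiv \<sigma> triv_rep \<longleftrightarrow> \<sigma> = triv_rep"
  unfolding rep_equiv_def rep_ker_def triv_rep_def by (auto simp: set_eq_iff fun_eq_iff)

lemma equiv_psi_q:
  fixes \<sigma> :: "'g::{finite,ab_group_add} \<Rightarrow> complex"
  assumes s: "is_rep \<sigma>" and c: "coprime q (card (UNIV :: 'g set))" and q: "q \<noteq> 0"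
  shows "rep_equiv (psi_rep q \<sigma>) \<sigma>"
proof -
  let ?N = "card (UNIV :: 'g set)"
  obtain u v where uv: "q * u = ?N * v + gcd q ?N" using bezout_nat[OF q] by blast
  then have uv1: "q * u = ?N * v + 1" using c by simp
  have "\<sigma> x ^ q = 1 \<longleftrightarrow> \<sigma> x = 1" for x
  proof
    assume h: "\<sigma> x ^ q = 1"
    have "\<sigma> x = \<sigma> x ^ (?N * v + 1)" using rep_pow_card[OF s, of x] by (simp add: power_mult)
    also have "\<dots> = \<sigma> x ^ (q * u)" by (simp only: uv1)
    also have "\<dots> = (\<sigma> x ^ q) ^ u" by (rule power_mult)
    finally show "\<sigma> x = 1" using h by simp
  qed simp
  then show ?thesis
    unfolding rep_equiv_def rep_ker_def psi_rep_def using rep_gmul[OF s] by simp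
qed

lemma sum_idem:
  fixes R :: "('g::{finite,ab_group_add} \<Rightarrow> complex) set"
  assumes rs: "rep_system p R" and s: "is_rep \<sigma>" and t0: "t0 \<in> R" "rep_equiv \<sigma> t0"
    and T: "T \<subseteq> R"
  shows "rep_ext \<sigma> (\<Sum>\<tau>\<in>T. idem \<tau>) = (if t0 \<in> T then 1 else 0)"
proof -
  have "\<forall>\<sigma>. is_rep \<sigma> \<longrightarrow> (\<exists>!\<rho>. \<rho> \<in> R \<and> rep_equiv \<sigma> \<rho>)"
    using rs unfolding rep_system_def by (rule conjunct1[OF conjunct2])
  from this[rule_format, OF s] have ex1: "\<exists>!\<rho>. \<rho> \<in> R \<and> rep_equiv \<sigma> \<rho>" .
  have uq: "\<tau> = t0" if "\<tau> \<in> R" "rep_equiv \<sigma> \<tau>" for \<tau>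
  proof -
    have "(THE \<rho>. \<rho> \<in> R \<and> rep_equiv \<sigma> \<rho>) = \<tau>" by (rule the1_equality[OF ex1]) (simp add: that)
    moreover have "(THE \<rho>. \<rho> \<in> R \<and> rep_equiv \<sigma> \<rho>) = t0" by (rule the1_equality[OF ex1]) (simp add: t0)
    ultimately show ?thesis by simp
  qed
  have "rep_ext \<sigma> (\<Sum>\<tau>\<in>T. idem \<tau>) = (\<Sum>\<tau>\<in>T. if rep_equiv \<sigma> \<tau> then 1 else 0)"
    by (simp add: rep_ext_sum idem_prop[OF s])
  also have "\<dots> = (\<Sum>\<tau>\<in>T. if t0 = \<tau> then 1 else 0)"
  proof (rule sum.cong[OF refl])
    fix \<tau> assume "\<tau> \<in> T"
    then have "\<tau> \<in> R" using T by blast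
    then have "rep_equiv \<sigma> \<tau> \<longleftrightarrow> t0 = \<tau>" using uq[OF \<open>\<tau> \<in> R\<close>] t0(2) by auto
    then show "(if rep_equiv \<sigma> \<tau> then 1 else 0) = (if t0 = \<tau> then 1 else (0::complex))" by simp
  qed
  also have "\<dots> = (if t0 \<in> T then 1 else 0)"
  proof -
    have "\<forall>\<rho>\<in>R. is_rep \<rho>" using rs unfolding rep_system_def by (rule conjunct1)
    then have "R \<subseteq> {\<sigma>. is_rep \<sigma>}" by blast
    with T have "T \<subseteq> {\<sigma>. is_rep \<sigma>}" by (rule subset_trans)
    then have "finite T" using finite_reps by (rule finite_subset)
    then show ?thesis by (rule sum.delta')
  qed
  finally show ?thesis .
qed

lemma equiv_sym: "rep_equiv a b \<longleftrightarrow> rep_equiv b a" unfolding rep_equiv_def by auto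
lemma equiv_trans: "rep_equiv a b \<Longrightarrow> rep_equiv b c \<Longrightarrow> rep_equiv a c" unfolding rep_equiv_def by auto
lemma psi_triv: "psi_rep l triv_rep = triv_rep" unfolding psi_rep_def triv_rep_def by simp

theorem mainTheorem8:
  fixes p q e :: nat and R :: "('g::{finite,ab_group_add} \<Rightarrow> complex) set"
  assumes "prime p" and "e \<ge> 1" and "card (UNIV :: 'g set) = p ^ e"
    and "prime q" and "q \<noteq> p"
    and "rep_system p R"
  shows "(\<forall>\<rho>\<in>R. \<rho> \<noteq> triv_rep \<longrightarrow>
           psi_alg p (idem \<rho>) = (\<Sum>\<tau>\<in>{\<tau>\<in>R. psi_rep p \<tau> = \<rho>}. idem \<tau>)) \<and>
         psi_alg p (idem triv_rep) =
           idem triv_rep + (\<Sum>\<tau>\<in>{\<tau>\<in>R. \<tau> \<noteq> triv_rep \<and> psi_rep p \<tau> = triv_rep}. idem \<tau>) \<and>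
         (\<forall>\<rho>\<in>R. psi_alg q (idem \<rho>) = idem \<rho>)"
proof -
  note rs = assms(6)
  have C1: "\<forall>\<rho>\<in>R. is_rep \<rho>" using rs unfolding rep_system_def by (rule conjunct1)
  have C2: "\<forall>\<sigma>. is_rep \<sigma> \<longrightarrow> (\<exists>!\<rho>. \<rho> \<in> R \<and> rep_equiv \<sigma> \<rho>)"
    using rs unfolding rep_system_def by (rule conjunct1[OF conjunct2])
  have C3: "\<forall>\<tau>\<in>R. \<forall>\<rho>\<in>R. \<tau> \<noteq> triv_rep \<longrightarrow> rep_equiv (psi_rep p \<tau>) \<rho> \<longrightarrow> psi_rep p \<tau> = \<rho>"
    using rs unfolding rep_system_def by (rule conjunct2[OF conjunct2])
  have getr: "\<exists>t0. t0 \<in> R \<and> rep_equiv \<sigma> t0" if "is_rep \<sigma>" for \<sigma>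
  proof -
    from C2[rule_format, OF that] show ?thesis by (rule ex1E) blast
  qed
  obtain tt where tt: "tt \<in> R" "rep_equiv triv_rep tt" using getr[OF is_rep_triv] by blast
  have trivR: "triv_rep \<in> R" using tt equiv_triv equiv_sym by metis
  have part1: "psi_alg p (idem \<rho>) = (\<Sum>\<tau>\<in>{\<tau>\<in>R. psi_rep p \<tau> = \<rho>}. idem \<tau>)"
    if \<rho>: "\<rho> \<in> R" "\<rho> \<noteq> triv_rep" for \<rho>
  proof (rule rep_ext_unique)
    fix \<sigma> :: "'g \<Rightarrow> complex" assume s: "is_rep \<sigma>"
    obtain t0 where t0: "t0 \<in> R" "rep_equiv \<sigma> t0" using getr[OF s] by blast
    have L: "rep_ext \<sigma> (psi_alg p (idem \<rho>)) = (if rep_equiv (psi_rep p \<sigma>) \<rho> then 1 else 0)"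
      by (simp add: rep_ext_psi idem_prop[OF is_rep_psi[OF s]])
    have Rh: "rep_ext \<sigma> (\<Sum>\<tau>\<in>{\<tau>\<in>R. psi_rep p \<tau> = \<rho>}. idem \<tau>) = (if psi_rep p t0 = \<rho> then 1 else 0)"
      using sum_idem[OF rs s t0, of "{\<tau>\<in>R. psi_rep p \<tau> = \<rho>}"] t0 by simp
    have e1: "rep_equiv (psi_rep p \<sigma>) \<rho> \<longleftrightarrow> rep_equiv (psi_rep p t0) \<rho>"
      using equiv_psi[OF t0(2), of p] unfolding rep_equiv_def by simp
    have "rep_equiv (psi_rep p t0) \<rho> \<longleftrightarrow> psi_rep p t0 = \<rho>"
    proof (cases "t0 = triv_rep")
      case True
      then show ?thesis using \<rho>(2) equiv_triv[of \<rho>] equiv_sym[of triv_rep \<rho>] by (simp add: psi_triv)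
    next
      case False
      then show ?thesis using C3 t0(1) \<rho>(1) unfolding rep_equiv_def by blast
    qed
    then show "rep_ext \<sigma> (psi_alg p (idem \<rho>)) = rep_ext \<sigma> (\<Sum>\<tau>\<in>{\<tau>\<in>R. psi_rep p \<tau> = \<rho>}. idem \<tau>)"
      using L Rh e1 by simp
  qed
  have part2: "psi_alg p (idem triv_rep) =
           idem triv_rep + (\<Sum>\<tau>\<in>{\<tau>\<in>R. \<tau> \<noteq> triv_rep \<and> psi_rep p \<tau> = triv_rep}. idem \<tau>)"
  proof (rule rep_ext_unique)
    fix \<sigma> :: "'g \<Rightarrow> complex" assume s: "is_rep \<sigma>"
    obtain t0 where t0: "t0 \<in> R" "rep_equiv \<sigma> t0" using getr[OF s] by blast
    have L: "rep_ext \<sigma> (psi_alg p (idem triv_rep)) = (if rep_equiv (psi_rep p \<sigma>) triv_rep then 1 else 0)"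
      by (simp add: rep_ext_psi idem_prop[OF is_rep_psi[OF s]])
    have Rh: "rep_ext \<sigma> (idem triv_rep + (\<Sum>\<tau>\<in>{\<tau>\<in>R. \<tau> \<noteq> triv_rep \<and> psi_rep p \<tau> = triv_rep}. idem \<tau>))
       = (if rep_equiv \<sigma> triv_rep then 1 else 0) + (if t0 \<noteq> triv_rep \<and> psi_rep p t0 = triv_rep then 1 else 0)"
      unfolding rep_ext_add using sum_idem[OF rs s t0, of "{\<tau>\<in>R. \<tau> \<noteq> triv_rep \<and> psi_rep p \<tau> = triv_rep}"] t0
      by (simp add: idem_prop[OF s])
    have e1: "rep_equiv (psi_rep p \<sigma>) triv_rep \<longleftrightarrow> psi_rep p t0 = triv_rep"
      using equiv_psi[OF t0(2), of p] equiv_triv[of "psi_rep p t0"] unfolding rep_equiv_def by simp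
    show "rep_ext \<sigma> (psi_alg p (idem triv_rep)) = rep_ext \<sigma> (idem triv_rep + (\<Sum>\<tau>\<in>{\<tau>\<in>R. \<tau> \<noteq> triv_rep \<and> psi_rep p \<tau> = triv_rep}. idem \<tau>))"
    proof (cases "t0 = triv_rep")
      case True
      then have "rep_equiv \<sigma> triv_rep" using t0 by simp
      then show ?thesis using L Rh e1 True by (simp add: psi_triv)
    next
      case False
      have "\<not> rep_equiv \<sigma> triv_rep"
      proof
        assume "rep_equiv \<sigma> triv_rep"
        then have "rep_equiv triv_rep t0" using t0(2) equiv_sym equiv_trans by metis
        then show False using False equiv_triv equiv_sym by metis
      qed
      then show ?thesis using L Rh e1 False by simp
    qed
  qed
  have cop: "coprime q (card (UNIV :: 'g set))"
    using primes_coprime[OF assms(4,1,5)] assms(3) by simp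
  have q0: "q \<noteq> 0" using assms(4) by auto
  have part3: "psi_alg q (idem \<rho>) = idem \<rho>" if "\<rho> \<in> R" for \<rho>
  proof (rule rep_ext_unique)
    fix \<sigma> :: "'g \<Rightarrow> complex" assume s: "is_rep \<sigma>"
    have "rep_equiv (psi_rep q \<sigma>) \<rho> \<longleftrightarrow> rep_equiv \<sigma> \<rho>"
      using equiv_psi_q[OF s cop q0] unfolding rep_equiv_def by simp
    then show "rep_ext \<sigma> (psi_alg q (idem \<rho>)) = rep_ext \<sigma> (idem \<rho>)"
      by (simp add: rep_ext_psi idem_prop[OF is_rep_psi[OF s]] idem_prop[OF s])
  qed
  show ?thesis using part1 part2 part3 by blast
qed

end
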